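(* Consider $\tau=t^3$ on Minkowski space $\mathbb{M}^{n+1}=(\mathbb{R}\times\mathbb{R}^n,-dt^2+\sum_i(dx^i)^2)$. Then: (1) $\hat{d}_\tau$ fails to be definite; in particular, for any two points $p,q$ in the slice $\{t=0\}$, $\hat{d}_\tau(p,q)=0$; (2) $\hat{d}_\tau$ fails to encode the causal structure; in particular, for any two points $p=(t_p,p_S)$ and $q=(t_q,q_S)$ with $t_p<0<t_q$, we have $\hat{d}_\tau(p,q)=\tau(q)-\tau(p)$.
   Context: Minkowski space is time-oriented by $\partial_t$; $\tau=t^3$ is strictly increasing along future causal curves. A piecewise causal curve $\beta:[a,b]\to M$ has a partition $a=s_0<\dots<s_k=b$ with each restriction a smooth future or past causal curve (all tangents, including one-sided ones, future or past pointing causal); its null length is $\hat{L}_\tau(\beta)=\sum_i|\tau(\beta(s_i))-\tau(\beta(s_{i-1}))|$, and $\hat{d}_\tau(p,q)=\inf\{\hat{L}_\tau(\beta):\beta$ piecewise causal from $p$ to $q\}$. *)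

theory Defs
  imports "HOL-Analysis.Analysis"
begin

text \<open>Minkowski space M^{n+1} = R x R^n, points (t, x); the spatial factor is real^'n
  for an arbitrary finite index type 'n (so n = CARD('n) >= 1).\<close>

type_synonym 'n mpoint = "real \<times> (real ^ 'n)"

definition tau :: "('n::finite) mpoint \<Rightarrow> real" where
  "tau p = (fst p) ^ 3"

definition future_causal :: "('n::finite) mpoint \<Rightarrow> bool" where
  "future_causal v \<longleftrightarrow> v \<noteq> 0 \<and> norm (snd v) ^ 2 - (fst v) ^ 2 \<le> 0 \<and> fst v > 0"

definition past_causal :: "('n::finite) mpoint \<Rightarrow> bool" where
  "past_causal v \<longleftrightarrow> v \<noteq> 0 \<and> norm (snd v) ^ 2 - (fst v) ^ 2 \<le> 0 \<and> fst v < 0"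

definition smooth_on_cl :: "(real \<Rightarrow> 'v::real_normed_vector) \<Rightarrow> real \<Rightarrow> real \<Rightarrow> (nat \<Rightarrow> real \<Rightarrow> 'v) \<Rightarrow> bool" where
  "smooth_on_cl f a b D \<longleftrightarrow>
     (\<forall>t\<in>{a..b}. D 0 t = f t) \<and>
     (\<forall>k. \<forall>t\<in>{a..b}. (D k has_vector_derivative D (Suc k) t) (at t within {a..b}))"

definition smooth_causal_piece :: "(real \<Rightarrow> ('n::finite) mpoint) \<Rightarrow> real \<Rightarrow> real \<Rightarrow> bool" where
  "smooth_causal_piece \<beta> a b \<longleftrightarrow>
     (\<exists>D. smooth_on_cl \<beta> a b D \<and>
        ((\<forall>t\<in>{a..b}. future_causal (D 1 t)) \<or> (\<forall>t\<in>{a..b}. past_causal (D 1 t))))"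

definition piecewise_causal ::
  "(real \<Rightarrow> ('n::finite) mpoint) \<Rightarrow> real \<Rightarrow> real \<Rightarrow> nat \<Rightarrow> (nat \<Rightarrow> real) \<Rightarrow> bool" where
  "piecewise_causal \<beta> a b k s \<longleftrightarrow>
     k \<ge> 1 \<and> s 0 = a \<and> s k = b \<and> (\<forall>i<k. s i < s (Suc i)) \<and>
     (\<forall>i<k. smooth_causal_piece \<beta> (s i) (s (Suc i)))"

definition null_length :: "(real \<Rightarrow> ('n::finite) mpoint) \<Rightarrow> nat \<Rightarrow> (nat \<Rightarrow> real) \<Rightarrow> real" where
  "null_length \<beta> k s = (\<Sum>i<k. \<bar>tau (\<beta> (s (Suc i))) - tau (\<beta> (s i))\<bar>)"

definition d_hat :: "('n::finite) mpoint \<Rightarrow> 'n mpoint \<Rightarrow> real" where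
  "d_hat p q = Inf {null_length \<beta> k s | \<beta> a b k s.
      piecewise_causal \<beta> a b k s \<and> \<beta> a = p \<and> \<beta> b = q}"

end

theory Submission
  imports Defs
begin

definition poly :: "(nat \<Rightarrow> ('n::finite) mpoint) \<Rightarrow> real \<Rightarrow> 'n mpoint" where
  "poly v t = v (nat \<lfloor>t\<rfloor>) + (t - real_of_int \<lfloor>t\<rfloor>) *\<^sub>R (v (Suc (nat \<lfloor>t\<rfloor>)) - v (nat \<lfloor>t\<rfloor>))"

lemma poly_nat[simp]: "poly v (real i) = v i"
  by (simp add: poly_def)

lemma poly_seg:
  assumes "t \<in> {real i..real (Suc i)}"
  shows "poly v t = v i + (t - real i) *\<^sub>R (v (Suc i) - v i)"
proof (cases "t = real (Suc i)")
  case True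
  then have "poly v t = v (Suc i)" using poly_nat[of v "Suc i"] by simp
  then show ?thesis using True by (simp add: algebra_simps)
next
  case False
  with assms have "\<lfloor>t\<rfloor> = int i" by (auto simp: floor_eq_iff)
  then show ?thesis by (simp add: poly_def)
qed

lemma piece:
  assumes "future_causal (v (Suc i) - v i) \<or> past_causal (v (Suc i) - v i)"
  shows "smooth_causal_piece (poly v) (real i) (real (Suc i))"
proof -
  define D where "D = (\<lambda>(m::nat) (t::real). if m = 0 then v i + (t - real i) *\<^sub>R (v (Suc i) - v i)
      else if m = 1 then v (Suc i) - v i else 0)"
  have "smooth_on_cl (poly v) (real i) (real (Suc i)) D"
    unfolding smooth_on_cl_def
  proof (intro conjI ballI allI)
    fix t assume "t \<in> {real i..real (Suc i)}"
    then show "D 0 t = poly v t" using poly_seg[of t i v] by (simp add: D_def)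
  next
    fix m t
    show "(D m has_vector_derivative D (Suc m) t) (at t within {real i..real (Suc i)})"
    proof (cases "m = 0")
      case True
      then show ?thesis unfolding D_def
        by (auto intro!: derivative_eq_intros)
    next
      case False
      then show ?thesis unfolding D_def
        by (auto intro!: derivative_eq_intros)
    qed
  qed
  moreover have "D 1 = (\<lambda>t. v (Suc i) - v i)" by (simp add: D_def)
  ultimately show ?thesis using assms unfolding smooth_causal_piece_def by auto
qed

definition NL :: "('n::finite) mpoint \<Rightarrow> 'n mpoint \<Rightarrow> real set" where
  "NL p q = {null_length \<beta> k s | \<beta> a b k s.
      piecewise_causal \<beta> a b k s \<and> \<beta> a = p \<and> \<beta> b = q}"

lemma d_hat_NL: "d_hat p q = Inf (NL p q)"
  by (simp add: d_hat_def NL_def)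

lemma poly_mem:
  fixes v :: "nat \<Rightarrow> ('n::finite) mpoint"
  assumes "k \<ge> 1" "\<And>i. i < k \<Longrightarrow> future_causal (v (Suc i) - v i) \<or> past_causal (v (Suc i) - v i)"
  shows "(\<Sum>i<k. \<bar>tau (v (Suc i)) - tau (v i)\<bar>) \<in> NL (v 0) (v k)"
proof -
  have "piecewise_causal (poly v) 0 (real k) k real"
    unfolding piecewise_causal_def using assms piece by auto
  moreover have "null_length (poly v) k real = (\<Sum>i<k. \<bar>tau (v (Suc i)) - tau (v i)\<bar>)"
    unfolding null_length_def using poly_nat[of v] by (metis of_nat_Suc)
  ultimately show ?thesis unfolding NL_def
    by (smt (verit, del_insts) mem_Collect_eq of_nat_0 poly_nat)
qed

lemma NL_nonneg: "x \<in> NL p q \<Longrightarrow> x \<ge> 0"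
  unfolding NL_def null_length_def by (auto intro!: sum_nonneg)

lemma NL_tel: "x \<in> NL p q \<Longrightarrow> x \<ge> tau q - tau p"
proof -
  assume "x \<in> NL p q"
  then obtain \<beta> a b k s where h: "piecewise_causal \<beta> a b k s" "\<beta> a = p" "\<beta> b = q"
    "x = null_length \<beta> k s" unfolding NL_def by blast
  have "tau q - tau p = (\<Sum>i<k. tau (\<beta> (s (Suc i))) - tau (\<beta> (s i)))"
    using h sum_lessThan_telescope[of "\<lambda>i. tau (\<beta> (s i))" k] by (simp add: piecewise_causal_def)
  also have "\<dots> \<le> \<bar>\<dots>\<bar>" by simp
  also have "\<dots> \<le> x" unfolding h null_length_def by (rule sum_abs)
  finally show ?thesis .
qed

definition zig :: "real ^ 'n \<Rightarrow> real ^ 'n \<Rightarrow> real \<Rightarrow> nat \<Rightarrow> nat \<Rightarrow> ('n::finite) mpoint" where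
  "zig x y h N i = ((if even i then 0 else h), x + (real i / (2 * real N)) *\<^sub>R (y - x))"

lemma zig_step:
  assumes "N \<ge> 1" "h = (norm (y - x) + 1) / (2 * real N)"
  shows "(future_causal (zig x y h N (Suc i) - zig x y h N i) \<or> past_causal (zig x y h N (Suc i) - zig x y h N i))
     \<and> \<bar>tau (zig x y h N (Suc i)) - tau (zig x y h N i)\<bar> = h ^ 3"
proof -
  have "norm (y - x) + 1 > 0" by (smt (verit) norm_ge_zero)
  then have hp: "h > 0" using assms by (simp add: divide_pos_pos)
  have sd: "snd (zig x y h N (Suc i) - zig x y h N i) = (1 / (2 * real N)) *\<^sub>R (y - x)"
  proof -
    have "snd (zig x y h N (Suc i) - zig x y h N i) = (real (Suc i) / (2 * real N) - real i / (2 * real N)) *\<^sub>R (y - x)"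
      by (simp only: zig_def snd_diff snd_conv scaleR_diff_left) simp
    also have "real (Suc i) / (2 * real N) - real i / (2 * real N) = 1 / (2 * real N)"
      by (simp add: diff_divide_distrib[symmetric])
    finally show ?thesis .
  qed
  have "norm (snd (zig x y h N (Suc i) - zig x y h N i)) = norm (y - x) / (2 * real N)"
    unfolding sd using assms by simp
  also have "\<dots> \<le> h" using assms by (simp add: divide_right_mono)
  finally have n: "norm (snd (zig x y h N (Suc i) - zig x y h N i)) \<le> h" .
  then have n2: "norm (snd (zig x y h N (Suc i) - zig x y h N i)) ^ 2 \<le> h ^ 2"
    by (simp add: power_mono)
  show ?thesis
  proof (cases "even i")
    case True
    then show ?thesis using n2 hp
      by (auto simp: future_causal_def zig_def tau_def prod_eq_iff)
  next
    case False
    then show ?thesis using n2 hp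
      by (auto simp: past_causal_def zig_def tau_def prod_eq_iff)
  qed
qed

lemma Inf_eq_approx:
  fixes S :: "real set"
  assumes "\<And>x. x \<in> S \<Longrightarrow> L \<le> x" "\<And>e. e > 0 \<Longrightarrow> \<exists>x\<in>S. x < L + e"
  shows "Inf S = L"
proof -
  have ne: "S \<noteq> {}" using assms(2)[of 1] by auto
  have bdd: "bdd_below S" using assms(1) by (auto simp: bdd_below_def)
  have "L \<le> Inf S" using ne assms(1) by (rule cInf_greatest)
  moreover have "Inf S \<le> L"
  proof (rule ccontr)
    assume "\<not> Inf S \<le> L"
    then obtain x where "x \<in> S" "x < L + (Inf S - L)" using assms(2)[of "Inf S - L"] by auto
    moreover have "Inf S \<le> x" using cInf_lower[OF \<open>x \<in> S\<close> bdd] .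
    ultimately show False by simp
  qed
  ultimately show ?thesis by simp
qed

lemma zig0: "zig x y h N 0 = (0, x)" by (simp add: zig_def)
lemma zigN: "N \<ge> 1 \<Longrightarrow> zig x y h N (2 * N) = (0, y)" by (simp add: zig_def)

lemma small:
  fixes c e :: real
  assumes "c > 0" "e > 0"
  shows "\<exists>N::nat. N \<ge> 1 \<and> 2 * real N * (c / (2 * real N)) ^ 3 < e"
proof -
  obtain N :: nat where N0: "max 1 (c ^ 3 / e) < real N" using reals_Archimedean2 by blast
  then have N: "c ^ 3 / e < real N" and N1: "real N \<ge> 1" by auto
  have "2 * real N * (c / (2 * real N)) ^ 3 = c ^ 3 / (4 * real N ^ 2)"
    using N1 by (simp add: power_divide field_simps power3_eq_cube power2_eq_square)
  also have "\<dots> \<le> c ^ 3 / real N"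
    using N1 assms by (intro divide_left_mono) (auto simp: power2_eq_square mult_right_mono)
  also have "\<dots> < e" using N N1 assms by (simp add: field_simps)
  finally show ?thesis using N1 by auto
qed

lemma part1:
  fixes p q :: "('n::finite) mpoint"
  assumes "fst p = 0" "fst q = 0"
  shows "d_hat p q = 0"
  unfolding d_hat_NL
proof (rule Inf_eq_approx)
  fix x assume "x \<in> NL p q" then show "0 \<le> x" by (rule NL_nonneg)
next
  fix e :: real assume e: "e > 0"
  define c where "c = norm (snd q - snd p) + 1"
  have c: "c > 0" unfolding c_def by (smt (verit) norm_ge_zero)
  obtain N :: nat where N: "N \<ge> 1" "2 * real N * (c / (2 * real N)) ^ 3 < e" using small[OF c e] by blast
  define h where "h = c / (2 * real N)"
  let ?v = "zig (snd p) (snd q) h N"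
  have "(\<Sum>i<2*N. \<bar>tau (?v (Suc i)) - tau (?v i)\<bar>) \<in> NL (?v 0) (?v (2*N))"
    using N zig_step[of N h "snd q" "snd p"] by (intro poly_mem) (auto simp: h_def c_def)
  moreover have "(\<Sum>i<2*N. \<bar>tau (?v (Suc i)) - tau (?v i)\<bar>) = 2 * real N * h ^ 3"
    using N zig_step[of N h "snd q" "snd p"] by (simp add: h_def c_def)
  moreover have "?v 0 = p" using zig0[of "snd p" "snd q" h N] assms(1) by (metis prod.collapse)
  moreover have "?v (2*N) = q" using zigN[OF N(1), of "snd p" "snd q" h] assms(2) by (metis prod.collapse)
  ultimately show "\<exists>x\<in>NL p q. x < 0 + e" using N h_def by auto
qed

lemma part2:
  fixes p q :: "('n::finite) mpoint"
  assumes a: "fst p < 0" and b: "0 < fst q"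
  shows "d_hat p q = tau q - tau p"
  unfolding d_hat_NL
proof (rule Inf_eq_approx)
  fix x assume "x \<in> NL p q" then show "tau q - tau p \<le> x" by (rule NL_tel)
next
  fix e :: real assume e: "e > 0"
  define c where "c = norm (snd q - snd p) + 1"
  have c: "c > 0" unfolding c_def by (smt (verit) norm_ge_zero)
  obtain N :: nat where N: "N \<ge> 1" "2 * real N * (c / (2 * real N)) ^ 3 < e" using small[OF c e] by blast
  define h where "h = c / (2 * real N)"
  define z where "z = zig (snd p) (snd q) h N"
  define w where "w = (\<lambda>i. if i = 0 then p else if i = 2 * N + 2 then q else z (i - 1))"
  have zs: "\<And>i. (future_causal (z (Suc i) - z i) \<or> past_causal (z (Suc i) - z i))
     \<and> \<bar>tau (z (Suc i)) - tau (z i)\<bar> = h ^ 3"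
    unfolding z_def using N zig_step[of N h "snd q" "snd p"] by (auto simp: h_def c_def)
  have z0: "z 0 = (0, snd p)" unfolding z_def by (rule zig0)
  have zN: "z (2 * N) = (0, snd q)" unfolding z_def using N(1) by (rule zigN)
  have w0: "w 0 = p" and wN: "w (Suc (Suc (2 * N))) = q" by (auto simp: w_def)
  have w1: "w (Suc 0) = z 0" using N by (simp add: w_def)
  have wl: "w (Suc (2 * N)) = z (2 * N)" by (simp add: w_def)
  have wm: "\<And>i. i < 2 * N \<Longrightarrow> w (Suc (Suc i)) = z (Suc i) \<and> w (Suc i) = z i"
    by (auto simp: w_def)
  have st0: "w (Suc 0) - w 0 = (- fst p, 0)" unfolding w1 z0 w0 by (simp add: prod_eq_iff)
  have stl: "w (Suc (Suc (2 * N))) - w (Suc (2 * N)) = (fst q, 0)" unfolding wN wl zN by (simp add: prod_eq_iff)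
  have steps: "\<And>i. i < Suc (Suc (2 * N)) \<Longrightarrow> future_causal (w (Suc i) - w i) \<or> past_causal (w (Suc i) - w i)"
  proof -
    fix i assume i: "i < Suc (Suc (2 * N))"
    consider "i = 0" | "i = Suc (2 * N)" | j where "i = Suc j" "j < 2 * N" using i
      by (cases i) (auto simp: less_Suc_eq)
    then show "future_causal (w (Suc i) - w i) \<or> past_causal (w (Suc i) - w i)"
    proof cases
      case 1 then show ?thesis using st0 a by (simp add: future_causal_def prod_eq_iff)
    next
      case 2 then show ?thesis using stl b by (simp add: future_causal_def prod_eq_iff)
    next
      case 3 then show ?thesis using wm[of j] zs[of j] by simp
    qed
  qed
  have mem: "(\<Sum>i<Suc (Suc (2*N)). \<bar>tau (w (Suc i)) - tau (w i)\<bar>) \<in> NL (w 0) (w (Suc (Suc (2*N))))"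
    by (rule poly_mem) (use steps in auto)
  have "(\<Sum>i<Suc (Suc (2*N)). \<bar>tau (w (Suc i)) - tau (w i)\<bar>)
      = \<bar>tau (w (Suc 0)) - tau (w 0)\<bar> + (\<Sum>i<2*N. \<bar>tau (w (Suc (Suc i))) - tau (w (Suc i))\<bar>)
        + \<bar>tau (w (Suc (Suc (2 * N)))) - tau (w (Suc (2 * N)))\<bar>"
    using sum.lessThan_Suc_shift[of "\<lambda>i. \<bar>tau (w (Suc i)) - tau (w i)\<bar>" "Suc (2*N)"]
      sum.lessThan_Suc[of "\<lambda>i. \<bar>tau (w (Suc (Suc i))) - tau (w (Suc i))\<bar>" "2*N"]
    by simp
  also have "(\<Sum>i<2*N. \<bar>tau (w (Suc (Suc i))) - tau (w (Suc i))\<bar>) = (\<Sum>i<2*N. h ^ 3)"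
    using wm zs by (intro sum.cong) auto
  also have "\<bar>tau (w (Suc 0)) - tau (w 0)\<bar> = - tau p"
    unfolding w1 z0 w0 using a by (simp add: tau_def)
  also have "\<bar>tau (w (Suc (Suc (2 * N)))) - tau (w (Suc (2 * N)))\<bar> = tau q"
    unfolding wl zN wN using b by (simp add: tau_def)
  finally have "(\<Sum>i<Suc (Suc (2*N)). \<bar>tau (w (Suc i)) - tau (w i)\<bar>) = tau q - tau p + 2 * real N * h ^ 3"
    by simp
  then have "tau q - tau p + 2 * real N * h ^ 3 \<in> NL p q" using mem unfolding w0 wN by simp
  then show "\<exists>x\<in>NL p q. x < tau q - tau p + e" using N unfolding h_def by force
qed

theorem proposition3p4:
  fixes p q :: "('n::finite) mpoint"
  shows "(fst p = 0 \<and> fst q = 0 \<longrightarrow> d_hat p q = 0)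
     \<and> (fst p < 0 \<and> 0 < fst q \<longrightarrow> d_hat p q = tau q - tau p)"
  using part1 part2 by blast

end
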